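(* Let $\mathcal{F}$ be a hypothesis class of functions $\mathcal{X}\to\{\pm1\}$ with finite VC dimension $d$, and $\mathcal{P}$ an unknown distribution on $\mathcal{X}\times\{\pm1\}$. Consider a run of Active-ILESS with confidence $\delta$ and suppose the event $\mathcal{K}$ occurred. Then every true risk minimizer $f^*$ of the original distribution $\mathcal{P}$ belongs to $G_t$ for all $t$. Consequently $R_{\mathcal{P}(G_t)}(f^* )\le R(f^* )$ for all $t$.
   Context: $R(f)=R_{\mathcal{P}}(f)=\Pr_{\mathcal{P}}[f(X)\ne Y]$; $\hat R(f,S)$ is the fraction of examples of $S$ misclassified by $f$; $f^*$ is any minimizer of $R$ over $\mathcal{F}$. Slacks: for $n>0$, $\delta'\in(0,1)$, $A=4d\ln\frac{16ne}{d\delta'}$, $\hat\sigma_{R-\hat R}(n,\delta',d,\hat r)=\frac{A}{n}+\sqrt{\frac{A}{n}\hat r}$, $\bar\sigma_{R-\hat R}(n,\delta',d,r)=\sqrt{\frac{A}{n}r}$, $\bar\sigma_{\hat R-R}(n,\delta',d,r)=\frac{A}{n}+\sqrt{\frac{A}{n}r}$, $\hat\sigma_{\hat R-R}(n,\delta',d,\hat r)=\sqrt{\frac{A}{n}\hat r}$, $\sigma_{R-\hat R}=\min\{\hat\sigma_{R-\hat R}(\cdot,\hat r),\bar\sigma_{R-\hat R}(\cdot,r)\}$, $\sigma_{\hat R-R}=\min\{\bar\sigma_{\hat R-R}(\cdot,r),\hat\sigma_{\hat R-R}(\cdot,\hat r)\}$. $AGR(G)=\{x:\text{all }f\in G\text{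 agree on }x\}$. Active-ILESS (inputs: $\epsilon$ and/or budget $m$, confidence $\delta$, $\mathcal{F}$, $d$, i.i.d. stream $x_1,x_2,\dots$ from $\mathcal{P}$): initialize $\hat S=\emptyset$, $G_0=\mathcal{F}$, $t=1$; for each $x_t$: if $x_t\in AGR(G_{t-1})$ do not request its label and set $y_t=f(x_t)$ for any $f\in G_{t-1}$, otherwise request the true label $y_t$; add $(x_t,y_t)$ to $\hat S$; let $\hat f$ be an ERM on $\hat S$; if $\log_2t\in\mathbb{N}$: set $\sigma_{\rm Active}=\hat\sigma_{R-\hat R}(\tfrac t2,\tfrac\delta{2t},d,\hat R(\hat f,\hat S))+\bar\sigma_{\hat R-R}\big(\tfrac t2,\tfrac\delta{2t},d,\hat R(\hat f,\hat S)+\hat\sigma_{R-\hat R}(\tfrac t2,\tfrac\delta{2t},d,\hat R(\hat f,\hat S))\big)$, terminate returning $\hat f$ if $\epsilon$ was given and $\sigma_{\rm Active}<\epsilon$, set $G_t=\{f:\hat R(f,\hat S)\le\hat R(\hat f,\hat S)+\sigma_{\rm Active}\}$ and reset $\hat S=\emptyset$; otherwise $G_t=G_{t-1}$; if $m$ was given and $t=m$ terminate returning $\hat f$; increment $t$. For $G\subseteq\mathcal{F}$, $\mathcal{P}(G)$ is the distribution of $(X,Y')$ with $(X,Y)\sim\mathcal{P}$, $Y'$ = common value of $G$ at $X$ if $X\in AGR(G)$ and $Y'=Y$ otherwise; $R_{\mathcal{P}(G)}(f)=\Pr[f(X)\ne Y']$. Event $\mathcal{K}$: for every $t=2^i$ reached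 and every $f\in\mathcal{F}$, with $\hat R(f)=\hat R(f,\hat S)$ for $\hat S$ at iteration $t$ before reset, $R_{\mathcal{P}(G_{t-1})}(f)\le\hat R(f)+\sigma_{R-\hat R}(\tfrac t2,\tfrac\delta{2t},d,R_{\mathcal{P}(G_{t-1})}(f),\hat R(f))$ and $\hat R(f)\le R_{\mathcal{P}(G_{t-1})}(f)+\sigma_{\hat R-R}(\tfrac t2,\tfrac\delta{2t},d,R_{\mathcal{P}(G_{t-1})}(f),\hat R(f))$. *)

theory Defs
  imports "HOL-Probability.Probability"
begin

text \<open>Labels \<open>+1/-1\<close> are represented by \<open>True/False\<close>; hypotheses are maps \<open>'x \<Rightarrow> bool\<close>.\<close>

definition shatters :: "('x \<Rightarrow> bool) set \<Rightarrow> 'x set \<Rightarrow> bool" where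
  "shatters F A \<longleftrightarrow> (\<forall>B\<subseteq>A. \<exists>f\<in>F. \<forall>x\<in>A. f x = (x \<in> B))"

definition has_vc_dim :: "('x \<Rightarrow> bool) set \<Rightarrow> nat \<Rightarrow> bool" where
  "has_vc_dim F d \<longleftrightarrow>
     (\<exists>A. finite A \<and> card A = d \<and> shatters F A) \<and>
     (\<forall>A. finite A \<and> shatters F A \<longrightarrow> card A \<le> d)"

definition slackA :: "real \<Rightarrow> real \<Rightarrow> nat \<Rightarrow> real" where
  "slackA n \<delta>' d = 4 * real d * ln (16 * n * exp 1 / (real d * \<delta>'))"

definition hat_sigma_R_Rhat :: "real \<Rightarrow> real \<Rightarrow> nat \<Rightarrow> real \<Rightarrow> real" where
  "hat_sigma_R_Rhat n \<delta>' d rh = slackA n \<delta>' d / n + sqrt (slackA n \<delta>' d / n * rh)"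

definition bar_sigma_R_Rhat :: "real \<Rightarrow> real \<Rightarrow> nat \<Rightarrow> real \<Rightarrow> real" where
  "bar_sigma_R_Rhat n \<delta>' d r = sqrt (slackA n \<delta>' d / n * r)"

definition bar_sigma_Rhat_R :: "real \<Rightarrow> real \<Rightarrow> nat \<Rightarrow> real \<Rightarrow> real" where
  "bar_sigma_Rhat_R n \<delta>' d r = slackA n \<delta>' d / n + sqrt (slackA n \<delta>' d / n * r)"

definition hat_sigma_Rhat_R :: "real \<Rightarrow> real \<Rightarrow> nat \<Rightarrow> real \<Rightarrow> real" where
  "hat_sigma_Rhat_R n \<delta>' d rh = sqrt (slackA n \<delta>' d / n * rh)"

definition sigma_R_Rhat :: "real \<Rightarrow> real \<Rightarrow> nat \<Rightarrow> real \<Rightarrow> real \<Rightarrow> real" where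
  "sigma_R_Rhat n \<delta>' d r rh = min (hat_sigma_R_Rhat n \<delta>' d rh) (bar_sigma_R_Rhat n \<delta>' d r)"

definition sigma_Rhat_R :: "real \<Rightarrow> real \<Rightarrow> nat \<Rightarrow> real \<Rightarrow> real \<Rightarrow> real" where
  "sigma_Rhat_R n \<delta>' d r rh = min (bar_sigma_Rhat_R n \<delta>' d r) (hat_sigma_Rhat_R n \<delta>' d rh)"

definition sigma_active :: "nat \<Rightarrow> real \<Rightarrow> nat \<Rightarrow> real \<Rightarrow> real" where
  "sigma_active t \<delta> d rh =
     hat_sigma_R_Rhat (real t / 2) (\<delta> / (2 * real t)) d rh +
     bar_sigma_Rhat_R (real t / 2) (\<delta> / (2 * real t)) d
        (rh + hat_sigma_R_Rhat (real t / 2) (\<delta> / (2 * real t)) d rh)"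

definition emp_risk :: "('x \<Rightarrow> bool) \<Rightarrow> ('x \<times> bool) list \<Rightarrow> real" where
  "emp_risk f S = real (length (filter (\<lambda>(x, y). f x \<noteq> y) S)) / real (length S)"

definition risk :: "('x \<times> bool) measure \<Rightarrow> ('x \<Rightarrow> bool) \<Rightarrow> real" where
  "risk P f = measure P {z \<in> space P. f (fst z) \<noteq> snd z}"

definition AGR :: "('x \<Rightarrow> bool) set \<Rightarrow> 'x set" where
  "AGR G = {x. \<forall>f\<in>G. \<forall>g\<in>G. f x = g x}"

text \<open>The label \<open>Y'\<close> of \<open>\<P>(G)\<close>: the common value of \<open>G\<close> on \<open>AGR(G)\<close>, the true label otherwise.\<close>
definition relab :: "('x \<Rightarrow> bool) set \<Rightarrow> 'x \<Rightarrow> bool \<Rightarrow> bool" where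
  "relab G x y = (if G \<noteq> {} \<and> x \<in> AGR G then (SOME f. f \<in> G) x else y)"

definition riskG :: "('x \<times> bool) measure \<Rightarrow> ('x \<Rightarrow> bool) set \<Rightarrow> ('x \<Rightarrow> bool) \<Rightarrow> real" where
  "riskG P G f = measure P {z \<in> space P. f (fst z) \<noteq> relab G (fst z) (snd z)}"

definition is_pow2 :: "nat \<Rightarrow> bool" where
  "is_pow2 t \<longleftrightarrow> (\<exists>i. t = 2 ^ i)"

text \<open>
  \<open>active_iless_run F d \<delta> z T G S fh\<close>: iterations \<open>1..T\<close> of Active-ILESS were executed on the
  stream \<open>z t = (x_t, true label of x_t)\<close>.  \<open>G t\<close> is \<open>G_t\<close>, \<open>S t\<close> the sample \<open>\<hat>S\<close> at iteration
  \<open>t\<close> after adding the new example (before a possible reset), \<open>fh t\<close> the ERM chosen at iteration \<open>t\<close>.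
\<close>
definition active_iless_run ::
  "('x \<Rightarrow> bool) set \<Rightarrow> nat \<Rightarrow> real \<Rightarrow> (nat \<Rightarrow> 'x \<times> bool) \<Rightarrow> nat \<Rightarrow>
   (nat \<Rightarrow> ('x \<Rightarrow> bool) set) \<Rightarrow> (nat \<Rightarrow> ('x \<times> bool) list) \<Rightarrow> (nat \<Rightarrow> ('x \<Rightarrow> bool)) \<Rightarrow> bool" where
  "active_iless_run F d \<delta> z T G S fh \<longleftrightarrow>
     G 0 = F \<and> S 0 = [] \<and>
     (\<forall>t. 1 \<le> t \<and> t \<le> T \<longrightarrow>
        S t = (if is_pow2 (t - 1) then [] else S (t - 1)) @
              [(fst (z t), relab (G (t - 1)) (fst (z t)) (snd (z t)))] \<and>
        fh t \<in> F \<and> (\<forall>f\<in>F. emp_risk (fh t) (S t) \<le> emp_risk f (S t)) \<and>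
        G t = (if is_pow2 t
               then {f \<in> F. emp_risk f (S t) \<le> emp_risk (fh t) (S t) +
                               sigma_active t \<delta> d (emp_risk (fh t) (S t))}
               else G (t - 1)))"

text \<open>The event \<open>\<K>\<close> for the run (restricted to the iterations \<open>t = 2^i \<le> T\<close> that were reached).\<close>
definition event_K ::
  "('x \<times> bool) measure \<Rightarrow> ('x \<Rightarrow> bool) set \<Rightarrow> nat \<Rightarrow> real \<Rightarrow> nat \<Rightarrow>
   (nat \<Rightarrow> ('x \<Rightarrow> bool) set) \<Rightarrow> (nat \<Rightarrow> ('x \<times> bool) list) \<Rightarrow> bool" where
  "event_K P F d \<delta> T G S \<longleftrightarrow>
     (\<forall>t. 1 \<le> t \<and> t \<le> T \<and> is_pow2 t \<longrightarrow>
        (\<forall>f\<in>F.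
           riskG P (G (t - 1)) f \<le> emp_risk f (S t) +
             sigma_R_Rhat (real t / 2) (\<delta> / (2 * real t)) d (riskG P (G (t - 1)) f) (emp_risk f (S t)) \<and>
           emp_risk f (S t) \<le> riskG P (G (t - 1)) f +
             sigma_Rhat_R (real t / 2) (\<delta> / (2 * real t)) d (riskG P (G (t - 1)) f) (emp_risk f (S t))))"

end

theory Submission
  imports Defs
begin

lemma relab_in:
  assumes "fstar \<in> H" "x \<in> AGR H"
  shows "relab H x y = fstar x"
proof -
  have "(SOME f. f \<in> H) \<in> H" using assms(1) by (metis someI)
  then show ?thesis using assms unfolding relab_def AGR_def by auto
qed

lemma riskG_le_risk:
  assumes P: "prob_space P" and fs: "fstar \<in> H"
    and m: "{z \<in> space P. fstar (fst z) \<noteq> snd z} \<in> sets P"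
  shows "riskG P H fstar \<le> risk P fstar"
proof -
  interpret prob_space P by (rule P)
  have "{z \<in> space P. fstar (fst z) \<noteq> relab H (fst z) (snd z)} \<subseteq> {z \<in> space P. fstar (fst z) \<noteq> snd z}"
  proof
    fix w assume w: "w \<in> {z \<in> space P. fstar (fst z) \<noteq> relab H (fst z) (snd z)}"
    show "w \<in> {z \<in> space P. fstar (fst z) \<noteq> snd z}"
    proof (cases "fst w \<in> AGR H")
      case True then show ?thesis using w relab_in[OF fs True] by simp
    next
      case False then show ?thesis using w by (simp add: relab_def)
    qed
  qed
  then show ?thesis unfolding riskG_def risk_def
    using finite_measure_mono m by blast
qed

lemma riskG_min:
  assumes P: "prob_space P" and fs: "fstar \<in> H"
    and m1: "{z \<in> space P. fstar (fst z) \<noteq> snd z} \<in> sets P"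
    and m2: "{z \<in> space P. f (fst z) \<noteq> snd z} \<in> sets P"
    and m3: "{z \<in> space P. fstar (fst z) \<noteq> relab H (fst z) (snd z)} \<in> sets P"
    and m4: "{z \<in> space P. f (fst z) \<noteq> relab H (fst z) (snd z)} \<in> sets P"
    and mn: "risk P fstar \<le> risk P f"
  shows "riskG P H fstar \<le> riskG P H f"
proof -
  interpret prob_space P by (rule P)
  define A1 where "A1 = {z \<in> space P. fstar (fst z) \<noteq> snd z}"
  define A2 where "A2 = {z \<in> space P. f (fst z) \<noteq> snd z}"
  define A3 where "A3 = {z \<in> space P. fstar (fst z) \<noteq> relab H (fst z) (snd z)}"
  define A4 where "A4 = {z \<in> space P. f (fst z) \<noteq> relab H (fst z) (snd z)}"
  note ms = m1[folded A1_def] m2[folded A2_def] m3[folded A3_def] m4[folded A4_def]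
  have ii: "integrable P (indicator A :: _ \<Rightarrow> real)" if "A \<in> sets P" for A
    using that by (simp add: integrable_indicator_iff less_top[symmetric])
  have pw: "indicator A2 z + indicator A3 z \<le> (indicator A4 z + indicator A1 z :: real)"
    if "z \<in> space P" for z
  proof (cases "fst z \<in> AGR H")
    case True
    then have "relab H (fst z) (snd z) = fstar (fst z)" using relab_in[OF fs] by blast
    then show ?thesis using that unfolding A1_def A2_def A3_def A4_def
      by (auto simp: indicator_def)
  next
    case False
    then have "relab H (fst z) (snd z) = snd z" by (simp add: relab_def)
    then show ?thesis using that unfolding A1_def A2_def A3_def A4_def
      by (auto simp: indicator_def)
  qed
  have "integral\<^sup>L P (\<lambda>z. indicator A2 z + indicator A3 z :: real)
      \<le> integral\<^sup>L P (\<lambda>z. indicator A4 z + indicator A1 z :: real)"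
    by (rule integral_mono) (use pw ii ms in auto)
  then have "measure P A2 + measure P A3 \<le> measure P A4 + measure P A1"
    using ii ms by (simp add: Bochner_Integration.integral_add emeasure_finite)
  moreover have "measure P A1 \<le> measure P A2" using mn unfolding risk_def A1_def A2_def .
  ultimately show ?thesis unfolding riskG_def A3_def[symmetric] A4_def[symmetric] by linarith
qed

lemma g_mono:
  fixes a x y :: real
  assumes "0 \<le> x" "x \<le> y" "0 \<le> x + a + sqrt (a  *  x)"
  shows "x + a + sqrt (a  *  x) \<le> y + a + sqrt (a  *  y)"
proof (cases "a \<ge> 0")
  case True
  then have "a * x \<le> a * y" using assms by (simp add: mult_left_mono)
  then have "sqrt (a * x) \<le> sqrt (a * y)" by simp
  then show ?thesis using assms by linarith
next
  case False
  define b where "b = - a"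
  have b: "b > 0" using False b_def by simp
  define u where "u = sqrt x"
  define w where "w = sqrt y"
  define q where "q = sqrt b"
  have u: "u \<ge> 0" "u * u = x" using assms u_def by auto
  have w: "w \<ge> 0" "w * w = y" using assms w_def by auto
  have q: "q > 0" "q * q = b" using b q_def by auto
  have uv: "u \<le> w" using assms u_def w_def by simp
  have a: "a = - (q * q)" using q b_def by simp
  have sx: "sqrt (a * x) = - (q * u)"
  proof -
    have "a * x = - ((q * u) ^ 2)" using a u by (simp add: power2_eq_square algebra_simps)
    then show ?thesis using q u by (simp add: real_sqrt_minus)
  qed
  have sy: "sqrt (a * y) = - (q * w)"
  proof -
    have "a * y = - ((q * w) ^ 2)" using a w by (simp add: power2_eq_square algebra_simps)
    then show ?thesis using q w by (simp add: real_sqrt_minus)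
  qed
  have h0: "0 \<le> u * u - q * q - q * u" using assms(3) sx a u by simp
  have "u \<ge> q"
  proof (rule ccontr)
    assume "\<not> u \<ge> q"
    then have "u < q" by simp
    then have "u * u \<le> u * q" using u(1) \<open>u < q\<close> by (intro mult_left_mono) auto
    moreover have "u * q < q * q" using \<open>u < q\<close> q(1) by (intro mult_strict_right_mono) auto
    ultimately show False using h0 mult_pos_pos[OF q(1) q(1)] by (simp add: algebra_simps)
  qed
  then have "0 \<le> (w - u) * (w + u - q)" using uv u by simp
  then show ?thesis using sx sy a u w by (simp add: algebra_simps)
qed

lemma emp_risk_nonneg: "0 \<le> emp_risk f S"
  by (simp add: emp_risk_def)

theorem lemma11:
  fixes F :: "('x \<Rightarrow> bool) set" and d :: nat and P :: "('x \<times> bool) measure"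
    and \<delta> :: real and z :: "nat \<Rightarrow> 'x \<times> bool" and T :: nat
    and G :: "nat \<Rightarrow> ('x \<Rightarrow> bool) set" and S :: "nat \<Rightarrow> ('x \<times> bool) list"
    and fh :: "nat \<Rightarrow> ('x \<Rightarrow> bool)" and fstar :: "'x \<Rightarrow> bool"
  assumes vc: "has_vc_dim F d"
    and P: "prob_space P"
    and meas: "\<forall>f\<in>F. {z \<in> space P. f (fst z) \<noteq> snd z} \<in> sets P"
    and measG: "\<forall>H\<subseteq>F. \<forall>f\<in>F. {z \<in> space P. f (fst z) \<noteq> relab H (fst z) (snd z)} \<in> sets P"
    and \<delta>: "0 < \<delta>" "\<delta> < 1"
    and run: "active_iless_run F d \<delta> z T G S fh"
    and K: "event_K P F d \<delta> T G S"
    and fstar: "fstar \<in> F" "\<forall>f\<in>F. risk P fstar \<le> risk P f"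
  shows "\<forall>t\<le>T. fstar \<in> G t \<and> riskG P (G t) fstar \<le> risk P fstar"
proof -
  interpret prob_space P by (rule P)
  have main: "fstar \<in> G t \<and> G t \<subseteq> F" if "t \<le> T" for t
    using that
  proof (induction t)
    case 0
    then show ?case using run fstar unfolding active_iless_run_def by auto
  next
    case (Suc n)
    let ?t = "Suc n"
    have IH: "fstar \<in> G n" "G n \<subseteq> F" using Suc by auto
    have R: "fh ?t \<in> F" and
      Gt: "G ?t = (if is_pow2 ?t
               then {f \<in> F. emp_risk f (S ?t) \<le> emp_risk (fh ?t) (S ?t) +
                               sigma_active ?t \<delta> d (emp_risk (fh ?t) (S ?t))}
               else G n)"
      using run Suc.prems unfolding active_iless_run_def by auto
    show ?case
    proof (cases "is_pow2 ?t")
      case False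
      then show ?thesis using Gt IH by simp
    next
      case True
      define n2 where "n2 = real ?t / 2"
      define dl where "dl = \<delta> / (2 * real ?t)"
      define a where "a = slackA n2 dl d / n2"
      define rs where "rs = riskG P (G n) fstar"
      define r where "r = riskG P (G n) (fh ?t)"
      define es where "es = emp_risk fstar (S ?t)"
      define \<rho> where "\<rho> = emp_risk (fh ?t) (S ?t)"
      have K1: "r \<le> \<rho> + sigma_R_Rhat n2 dl d r \<rho>"
        and K2: "es \<le> rs + sigma_Rhat_R n2 dl d rs es"
        using K Suc.prems True R fstar(1) unfolding event_K_def r_def \<rho>_def rs_def es_def n2_def dl_def
        by auto
      have hs: "sigma_R_Rhat n2 dl d r \<rho> \<le> a + sqrt (a * \<rho>)"
        unfolding sigma_R_Rhat_def hat_sigma_R_Rhat_def a_def by simp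
      have bs: "sigma_Rhat_R n2 dl d rs es \<le> rs + a + sqrt (a * rs) - rs"
        unfolding sigma_Rhat_R_def bar_sigma_Rhat_R_def a_def by simp
      have sa: "sigma_active ?t \<delta> d \<rho> = (a + sqrt (a * \<rho>)) + a + sqrt (a * (\<rho> + (a + sqrt (a * \<rho>))))"
        unfolding sigma_active_def hat_sigma_R_Rhat_def bar_sigma_Rhat_R_def a_def n2_def dl_def by simp
      have rsr: "rs \<le> r" unfolding rs_def r_def
        by (rule riskG_min[OF P IH(1)]) (use meas measG IH fstar R in auto)
      have rs0: "0 \<le> rs" unfolding rs_def riskG_def by simp
      have es0: "0 \<le> es" unfolding es_def by (rule emp_risk_nonneg)
      have "es \<le> rs + a + sqrt (a * rs)" using K2 bs by linarith
      also have "\<dots> \<le> (\<rho> + (a + sqrt (a * \<rho>))) + a + sqrt (a * (\<rho> + (a + sqrt (a * \<rho>))))"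
        by (rule g_mono) (use rs0 rsr K1 hs es0 K2 bs in linarith)+
      finally have "es \<le> \<rho> + sigma_active ?t \<delta> d \<rho>" using sa by linarith
      then show ?thesis using Gt True fstar(1) unfolding es_def \<rho>_def by auto
    qed
  qed
  show ?thesis
  proof (intro allI impI conjI)
    fix t assume "t \<le> T"
    with main show "fstar \<in> G t" by blast
    show "riskG P (G t) fstar \<le> risk P fstar"
      using riskG_le_risk[OF P] main[OF \<open>t \<le> T\<close>] meas fstar by blast
  qed
qed

end
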